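(* Fix $\epsilon_2>0$ and $(u_\pm,v_\pm)$ with $v_\pm>0$ and $u_->u_++2\epsilon_2$, and for small $\epsilon_1>0$ let $v_*^{\epsilon_2}$, $\sigma_1^{\epsilon_2},\sigma_2^{\epsilon_2}$ be the intermediate density and shock speeds of the two-shock Riemann solution. Then $$\lim_{\epsilon_1\to0}\int_{\sigma_1^{\epsilon_2}}^{\sigma_2^{\epsilon_2}}v_*^{\epsilon_2}\,d\xi=\tfrac12\big(v_+(u_--u_++2\epsilon_2)-v_-(u_+-u_-+2\epsilon_2)\big).$$
   Context: Perturbed Brio system: $u_t+(\tfrac12u^2+\tfrac12\epsilon_1v^2)_x=0$, $v_t+(uv-\epsilon_2v)_x=0$, $\epsilon_1,\epsilon_2>0$, $v>0$. The two-shock intermediate state $(u_*,v_* )$ satisfies $v_*>\max(v_-,v_+)$, $u_+<u_*<u_-$, $$u_*=u_-+(v_*-v_-)\frac{\epsilon_2-\sqrt{\epsilon_2^2+4\epsilon_1(v_*+v_-)^2}}{v_*+v_-},\qquad u_+=u_*+(v_+-v_* )\frac{\epsilon_2+\sqrt{\epsilon_2^2+4\epsilon_1(v_*+v_+)^2}}{v_*+v_+},$$ with shock speeds $\sigma_1=u_-+\frac{v_*(u_*-u_-)}{v_*-v_-}-\epsilon_2$, $\sigma_2=u_++\frac{v_*(u_+-u_* )}{v_+-v_*}-\epsilon_2$. *)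

theory Defs
  imports "HOL-Analysis.Analysis"
begin

text \<open>Two-shock intermediate state (u_*, v_*) of the perturbed Brio system with
parameters e1 = epsilon_1, e2 = epsilon_2 and Riemann data (um,vm) = (u_-,v_-),
(up,vp) = (u_+,v_+).\<close>
definition two_shock_state ::
  "real \<Rightarrow> real \<Rightarrow> real \<Rightarrow> real \<Rightarrow> real \<Rightarrow> real \<Rightarrow> real \<Rightarrow> real \<Rightarrow> bool" where
  "two_shock_state e1 e2 um vm up vp us vs \<longleftrightarrow>
     vs > max vm vp \<and> up < us \<and> us < um \<and>
     us = um + (vs - vm) * (e2 - sqrt (e2^2 + 4 * e1 * (vs + vm)^2)) / (vs + vm) \<and>
     up = us + (vp - vs) * (e2 + sqrt (e2^2 + 4 * e1 * (vs + vp)^2)) / (vs + vp)"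

definition shock_speed1 :: "real \<Rightarrow> real \<Rightarrow> real \<Rightarrow> real \<Rightarrow> real \<Rightarrow> real" where
  "shock_speed1 e2 um vm us vs = um + vs * (us - um) / (vs - vm) - e2"

definition shock_speed2 :: "real \<Rightarrow> real \<Rightarrow> real \<Rightarrow> real \<Rightarrow> real \<Rightarrow> real" where
  "shock_speed2 e2 up vp us vs = up + vs * (up - us) / (vp - vs) - e2"

end

theory Submission imports Defs begin

lemma sqb1:
  fixes x e2 a :: real
  assumes "x > 0" "e2 > 0"
  shows "sqrt (e2^2 + 4*x*a^2) - e2 \<le> 2*x*a^2/e2"
proof -
  define s where "s = sqrt (e2^2 + 4*x*a^2)"
  have s2: "s^2 = e2^2 + 4*x*a^2" unfolding s_def using assms by (simp add: add_nonneg_nonneg)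
  have se: "s \<ge> e2" unfolding s_def using assms by (simp add: real_le_rsqrt)
  have "(s - e2) * (s + e2) = 4*x*a^2" using s2 by (simp add: algebra_simps power2_eq_square)
  moreover have "s + e2 \<ge> 2*e2" using se by simp
  ultimately have "(s - e2) * (2*e2) \<le> 4*x*a^2"
    by (metis mult_left_mono se diff_ge_0_iff_ge)
  hence "s - e2 \<le> 4*x*a^2 / (2*e2)" using assms by (simp add: field_simps)
  thus ?thesis unfolding s_def by simp
qed

lemma sqb2:
  fixes x e2 b :: real
  assumes "x \<ge> 0" "e2 \<ge> 0" "b \<ge> 0"
  shows "sqrt (e2^2 + 4*x*b^2) \<le> e2 + 2* sqrt x*b"
proof -
  have eq: "(e2 + 2* sqrt x*b)^2 = e2^2 + 4*e2* sqrt x*b + 4*(sqrt x)^2*b^2"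
    by (simp add: power2_eq_square algebra_simps)
  have "e2^2 + 4*x*b^2 \<le> (e2 + 2* sqrt x*b)^2"
    unfolding eq using assms by simp
  hence "sqrt (e2^2 + 4*x*b^2) \<le> sqrt ((e2 + 2* sqrt x*b)^2)" by (rule real_sqrt_le_mono)
  thus ?thesis using assms by simp
qed

lemma sqb3:
  fixes x e2 b :: real
  assumes "x \<ge> 0" "b \<ge> 0"
  shows "2* sqrt x*b \<le> sqrt (e2^2 + 4*x*b^2)"
proof -
  have "sqrt (4*x*b^2) \<le> sqrt (e2^2 + 4*x*b^2)" by (rule real_sqrt_le_mono) simp
  moreover have "sqrt (4*x*b^2) = 2* sqrt x*b" using assms by (simp add: real_sqrt_mult)
  ultimately show ?thesis by simp
qed

lemma sqge: "e2 > 0 \<Longrightarrow> x \<ge> 0 \<Longrightarrow> e2 \<le> sqrt (e2^2 + 4*x*(a::real)^2)"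
  by (simp add: real_le_rsqrt)

lemma diffbound:
  fixes a b s1 s2 e2 x :: real
  assumes "a > 0" "b > 0" "e2 > 0" "s1 \<ge> e2" "s2 \<ge> e2"
    "s1^2 = e2^2 + 4*x*a^2" "s2^2 = e2^2 + 4*x*b^2"
  shows "\<bar>s2*a - s1*b\<bar> \<le> e2 * \<bar>a - b\<bar>"
proof -
  have pos: "s2*a + s1*b > 0" using assms by (smt (verit) mult_pos_pos)
  have ge: "s2*a + s1*b \<ge> e2*(a+b)" using assms
    by (smt (verit, best) distrib_left mult.commute mult_right_mono)
  have "(s2*a - s1*b)*(s2*a + s1*b) = s2^2*a^2 - s1^2*b^2" by (simp add: power2_eq_square algebra_simps)
  also have "\<dots> = e2^2*(a-b)*(a+b)" using assms(6,7) by (simp add: power2_eq_square algebra_simps)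
  finally have eq: "(s2*a - s1*b)*(s2*a + s1*b) = e2^2*(a-b)*(a+b)" .
  hence "\<bar>s2*a - s1*b\<bar> * (s2*a + s1*b) = e2^2*\<bar>a-b\<bar>*(a+b)"
    using pos assms by (metis abs_mult abs_of_pos add_pos_pos abs_power2 zero_less_power2 abs_mult_pos' )
  hence "\<bar>s2*a - s1*b\<bar> * (e2*(a+b)) \<le> e2^2*\<bar>a-b\<bar>*(a+b)"
    using ge by (metis abs_ge_zero mult_left_mono)
  hence "\<bar>s2*a - s1*b\<bar> * (e2*(a+b)) \<le> (e2*\<bar>a-b\<bar>) * (e2*(a+b))"
    by (simp add: power2_eq_square algebra_simps)
  moreover have "e2*(a+b) > 0" using assms by simp
  ultimately show ?thesis by (meson mult_le_cancel_right_pos)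
qed
lemma absaux: "(p::real) \<ge> 0 \<Longrightarrow> q \<ge> 0 \<Longrightarrow> p \<le> P \<Longrightarrow> q \<le> Q \<Longrightarrow> \<bar>r\<bar> \<le> R
  \<Longrightarrow> P + Q + R = S \<Longrightarrow> \<bar>- p - q + r\<bar> \<le> S" by linarith

lemma core:
  fixes vs vm vp e2 s1 s2 x D :: real
  assumes vm: "vm > 0" and vp: "vp > 0" and e2: "e2 > 0" and "x > 0"
    and v1: "vs \<ge> 2* vm" and v2: "vs \<ge> 2* vp" and s1e: "s1 \<ge> e2" and s2e: "s2 \<ge> e2"
    and s1: "s1^2 = e2^2 + 4*x*(vs+vm)^2" and s2: "s2^2 = e2^2 + 4*x*(vs+vp)^2"
    and D: "D = (vs-vm)*(s1-e2)/(vs+vm) + (vs-vp)*(e2+s2)/(vs+vp)"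
  shows "\<bar>vm*(vs*(s1-e2)/(vs+vm)) + vp*(vs*(e2+s2)/(vs+vp))
          - (1/2)*(vp*(D+2*e2)+vm*(D-2*e2))\<bar> \<le> (vm+vp)^2*(D+e2)/vs"
proof -
  define a where "a = vs+vm"
  define b where "b = vs+vp"
  define A where "A = vs*(s1-e2)/a"
  define B where "B = vs*(e2+s2)/b"
  have vs: "vs > 0" using vm v1 by linarith
  have a: "a > 0" "a \<ge> vs" unfolding a_def using vs vm by auto
  have b: "b > 0" "b \<ge> vs" unfolding b_def using vs vp by auto
  have A0: "A \<ge> 0" unfolding A_def using a vs s1e by simp
  have B0: "B \<ge> 0" unfolding B_def using b vs s2e e2 by simp
  have DAB: "D = A*(vs-vm)/vs + B*(vs-vp)/vs"
  proof -
    have "A*(vs-vm)/vs = (vs-vm)*(s1-e2)/a" unfolding A_def using vs a by (simp add: field_simps)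
    moreover have "B*(vs-vp)/vs = (vs-vp)*(e2+s2)/b" unfolding B_def using vs b by (simp add: field_simps)
    ultimately show ?thesis unfolding D a_def b_def by simp
  qed
  have "A/2 \<le> A*(vs-vm)/vs"
    using A0 vs v1 by (simp add: field_simps) (smt (verit) mult_left_mono)
  moreover have "B*(vs-vp)/vs \<ge> 0" using B0 vs v2 by simp
  ultimately have A2: "A \<le> 2*D" using DAB by linarith
  have "B/2 \<le> B*(vs-vp)/vs"
    using B0 vs v2 by (simp add: field_simps) (smt (verit) mult_left_mono)
  moreover have "A*(vs-vm)/vs \<ge> 0" using A0 vs v1 by simp
  ultimately have B2: "B \<le> 2*D" using DAB by linarith
  define E2 where "E2 = A + B - D"
  have E2eq: "E2 = (vm*A + vp*B)/vs" unfolding E2_def DAB using vs by (simp add: field_simps)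
  have "vm*A + vp*B \<le> 2*D*(vm+vp)"
  proof -
    have "vm*A \<le> vm*(2*D)" using A2 vm by (simp add: mult_left_mono)
    moreover have "vp*B \<le> vp*(2*D)" using B2 vp by (simp add: mult_left_mono)
    ultimately show ?thesis by (simp add: algebra_simps)
  qed
  moreover have "vm*A + vp*B \<ge> 0" using A0 B0 vm vp by simp
  ultimately have E2b: "\<bar>E2\<bar> \<le> 2*D*(vm+vp)/vs"
    unfolding E2eq using vs by (simp add: divide_right_mono)
  define E1 where "E1 = B - A - 2*e2"
  have E1eq: "E1 = - (e2* vp/b) - (e2* vm/a) + vs*(s2*a - s1*b)/(a*b)"
  proof -
    have 1: "vs*e2/b = e2 - e2* vp/b" using b(1) by (simp add: b_def field_simps)
    have 2: "vs*e2/a = e2 - e2* vm/a" using a(1) by (simp add: a_def field_simps)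
    have 3: "vs* s2/b - vs* s1/a = vs*(s2*a - s1*b)/(a*b)" using a(1) b(1) by (simp add: field_simps)
    have "E1 = vs*e2/b + vs*e2/a + (vs* s2/b - vs* s1/a) - 2*e2"
      unfolding E1_def A_def B_def using a(1) b(1) by (simp add: field_simps)
    thus ?thesis unfolding 1 2 3 by simp
  qed
  have db: "\<bar>s2*a - s1*b\<bar> \<le> e2 * \<bar>a - b\<bar>"
    by (rule diffbound) (use a b e2 s1e s2e s1 s2 in \<open>auto simp: a_def b_def\<close>)
  have ab: "a*b \<ge> vs* vs" using a b vs by (simp add: mult_mono)
  have "\<bar>vs*(s2*a - s1*b)/(a*b)\<bar> = vs*\<bar>s2*a - s1*b\<bar>/(a*b)"
    using vs a b by (simp add: abs_mult)
  also have "\<dots> \<le> vs*(e2*\<bar>a-b\<bar>)/(a*b)"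
    using db vs a b by (simp add: divide_right_mono)
  also have "\<dots> \<le> vs*(e2*\<bar>a-b\<bar>)/(vs* vs)"
    using ab vs e2 a(1) b(1) by (intro divide_left_mono) auto
  also have "\<dots> = e2*\<bar>vm-vp\<bar>/vs" using vs unfolding a_def b_def by simp
  also have "\<dots> \<le> e2*(vm+vp)/vs" using vm vp vs e2 by (intro divide_right_mono) auto
  finally have t3: "\<bar>vs*(s2*a - s1*b)/(a*b)\<bar> \<le> e2*(vm+vp)/vs" .
  have t1: "e2* vp/b \<le> e2* vp/vs" using b vs e2 vp by (intro divide_left_mono) auto
  have t2: "e2* vm/a \<le> e2* vm/vs" using a vs e2 vm by (intro divide_left_mono) auto
  have t12: "e2* vp/b \<ge> 0" "e2* vm/a \<ge> 0" using a b e2 vm vp by auto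
  have "e2* vp/vs + e2* vm/vs + e2*(vm+vp)/vs = 2*e2*(vm+vp)/vs" using vs by (simp add: field_simps)
  hence E1b: "\<bar>E1\<bar> \<le> 2*e2*(vm+vp)/vs" unfolding E1eq using absaux[OF t12 t1 t2 t3] by blast
  have key: "vm*A + vp*B - (1/2)*(vp*(D+2*e2)+vm*(D-2*e2)) = vp*(E1+E2)/2 + vm*(E2-E1)/2"
    unfolding E1_def E2_def by (simp add: field_simps)
  have "\<bar>vp*(E1+E2)/2 + vm*(E2-E1)/2\<bar> \<le> (vm+vp)*(\<bar>E1\<bar>+\<bar>E2\<bar>)/2"
  proof -
    have "\<bar>vp*(E1+E2)\<bar> \<le> vp*(\<bar>E1\<bar>+\<bar>E2\<bar>)" using vp by (simp add: abs_mult mult_left_mono)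
    moreover have "\<bar>vm*(E2-E1)\<bar> \<le> vm*(\<bar>E1\<bar>+\<bar>E2\<bar>)" using vm by (simp add: abs_mult mult_left_mono)
    moreover have "\<bar>vp*(E1+E2)/2 + vm*(E2-E1)/2\<bar> = \<bar>vp*(E1+E2) + vm*(E2-E1)\<bar>/2"
    proof -
      have "vp*(E1+E2)/2 + vm*(E2-E1)/2 = (vp*(E1+E2) + vm*(E2-E1))/2" by (simp add: add_divide_distrib)
      then show ?thesis by (metis abs_divide abs_numeral)
    qed
    moreover have "\<bar>vp*(E1+E2) + vm*(E2-E1)\<bar> \<le> \<bar>vp*(E1+E2)\<bar> + \<bar>vm*(E2-E1)\<bar>" by (rule abs_triangle_ineq)
    ultimately show ?thesis by (simp add: algebra_simps)
  qed
  also have "\<dots> \<le> (vm+vp)*(2*e2*(vm+vp)/vs + 2*D*(vm+vp)/vs)/2"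
    using E1b E2b vm vp by (intro divide_right_mono mult_left_mono) auto
  also have "\<dots> = (vm+vp)^2*(D+e2)/vs" using vs by (simp add: power2_eq_square field_simps)
  finally show ?thesis using key unfolding A_def B_def a_def b_def by simp
qed

lemma frac_le: "0 \<le> (t::real) \<Longrightarrow> t \<le> d \<Longrightarrow> 0 < d \<Longrightarrow> 0 \<le> c \<Longrightarrow> t*c/d \<le> c"
proof -
  assume h: "0 \<le> t" "t \<le> d" "0 < d" "0 \<le> c"
  have "t*c \<le> d*c" using h by (simp add: mult_right_mono)
  thus ?thesis using h by (simp add: divide_le_eq mult.commute)
qed

lemma fbound:
  fixes x e2 vm vp v :: real
  assumes "x > 0" "e2 > 0" "vm > 0" "vp > 0" "v \<ge> vm" "v \<ge> vp"
  shows "(v-vm)*(sqrt(e2^2+4*x*(v+vm)^2) - e2)/(v+vm) + (v-vp)*(e2 + sqrt(e2^2+4*x*(v+vp)^2))/(v+vp)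
     \<le> 2*x*(v+vm)^2/e2 + 2*e2 + 2 * sqrt x*(v+vp)"
proof -
  have s1: "sqrt(e2^2+4*x*(v+vm)^2) \<ge> e2" using assms by (intro sqge) auto
  have s2: "sqrt(e2^2+4*x*(v+vp)^2) \<ge> e2" using assms by (intro sqge) auto
  have "(v-vm)*(sqrt(e2^2+4*x*(v+vm)^2) - e2)/(v+vm) \<le> sqrt(e2^2+4*x*(v+vm)^2) - e2"
    using assms s1 by (intro frac_le) auto
  also have "\<dots> \<le> 2*x*(v+vm)^2/e2" using assms by (intro sqb1) auto
  finally have 1: "(v-vm)*(sqrt(e2^2+4*x*(v+vm)^2) - e2)/(v+vm) \<le> 2*x*(v+vm)^2/e2" .
  have "(v-vp)*(e2 + sqrt(e2^2+4*x*(v+vp)^2))/(v+vp) \<le> e2 + sqrt(e2^2+4*x*(v+vp)^2)"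
    using assms s2 by (intro frac_le) auto
  also have "\<dots> \<le> e2 + (e2 + 2 * sqrt x*(v+vp))" using assms by (simp add: sqb2)
  finally show ?thesis using 1 by linarith
qed

lemma state_facts:
  assumes st: "two_shock_state x e2 um vm up vp us vs" and x: "x > 0" and e2: "e2 > 0"
    and vm: "vm > 0" and vp: "vp > 0"
  shows "vs > vm" "vs > vp"
    "um - up = (vs-vm)*(sqrt(e2^2+4*x*(vs+vm)^2) - e2)/(vs+vm) + (vs-vp)*(e2 + sqrt(e2^2+4*x*(vs+vp)^2))/(vs+vp)"
    "vs*(shock_speed2 e2 up vp us vs - shock_speed1 e2 um vm us vs) =
       vm*(vs*(sqrt(e2^2+4*x*(vs+vm)^2) - e2)/(vs+vm)) + vp*(vs*(e2 + sqrt(e2^2+4*x*(vs+vp)^2))/(vs+vp))"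
proof -
  define s1 where "s1 = sqrt(e2^2+4*x*(vs+vm)^2)"
  define s2 where "s2 = sqrt(e2^2+4*x*(vs+vp)^2)"
  have us: "us = um + (vs - vm) * (e2 - s1) / (vs + vm)" and up: "up = us + (vp - vs) * (e2 + s2) / (vs + vp)"
    and m: "vs > max vm vp"
    using st unfolding two_shock_state_def s1_def s2_def by auto
  show v1: "vs > vm" and v2: "vs > vp" using m by auto
  have a: "vs + vm > 0" "vs - vm \<noteq> 0" using v1 vm by auto
  have b: "vs + vp > 0" "vp - vs \<noteq> 0" using v2 vp by auto
  show dd: "um - up = (vs-vm)*(sqrt(e2^2+4*x*(vs+vm)^2) - e2)/(vs+vm) + (vs-vp)*(e2 + sqrt(e2^2+4*x*(vs+vp)^2))/(vs+vp)"
  proof -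
    have e1: "(vs-vm)*(e2-s1)/(vs+vm) = -((vs-vm)*(s1-e2)/(vs+vm))"
      by (metis minus_diff_eq mult_minus_right minus_divide_left)
    have e2': "(vp-vs)*(e2+s2)/(vs+vp) = -((vs-vp)*(e2+s2)/(vs+vp))"
      by (metis minus_diff_eq mult_minus_left minus_divide_left)
    show ?thesis unfolding s1_def[symmetric] s2_def[symmetric] using us up e1 e2' by linarith
  qed
  have q1: "vs*(us-um)/(vs-vm) = vs*(e2-s1)/(vs+vm)"
  proof -
    have "us - um = (vs-vm)*(e2-s1)/(vs+vm)" using us by simp
    hence "vs*(us-um)/(vs-vm) = vs*((vs-vm)*((e2-s1)/(vs+vm)))/(vs-vm)" by simp
    also have "\<dots> = vs*((e2-s1)/(vs+vm))" using a by simp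
    also have "\<dots> = vs*(e2-s1)/(vs+vm)" by simp
    finally show ?thesis .
  qed
  have q2: "vs*(up-us)/(vp-vs) = vs*(e2+s2)/(vs+vp)"
  proof -
    have "up - us = (vp-vs)*(e2+s2)/(vs+vp)" using up by simp
    hence "vs*(up-us)/(vp-vs) = vs*((vp-vs)*((e2+s2)/(vs+vp)))/(vp-vs)" by simp
    also have "\<dots> = vs*((e2+s2)/(vs+vp))" using b by simp
    also have "\<dots> = vs*(e2+s2)/(vs+vp)" by simp
    finally show ?thesis .
  qed
  have "shock_speed2 e2 up vp us vs - shock_speed1 e2 um vm us vs
      = (up - um) + vs*(e2+s2)/(vs+vp) - vs*(e2-s1)/(vs+vm)"
    unfolding shock_speed1_def shock_speed2_def q1 q2 by simp
  also have "\<dots> = vm*((s1 - e2)/(vs+vm)) + vp*((e2+s2)/(vs+vp))"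
  proof -
    define P where "P = (s1-e2)/(vs+vm)"
    define Q where "Q = (e2+s2)/(vs+vp)"
    have d2: "um - up = (vs-vm)*P + (vs-vp)*Q" using dd unfolding P_def Q_def s1_def s2_def by simp
    have d3: "vs*(e2+s2)/(vs+vp) = vs*Q" unfolding Q_def by simp
    have d4: "vs*(e2-s1)/(vs+vm) = -(vs*P)" unfolding P_def
      by (metis minus_diff_eq mult_minus_right minus_divide_left times_divide_eq_right)
    show ?thesis unfolding d3 d4 using d2 unfolding P_def[symmetric] Q_def[symmetric]
      by (simp add: algebra_simps)
  qed
  finally show "vs*(shock_speed2 e2 up vp us vs - shock_speed1 e2 um vm us vs) =
       vm*(vs*(sqrt(e2^2+4*x*(vs+vm)^2) - e2)/(vs+vm)) + vp*(vs*(e2 + sqrt(e2^2+4*x*(vs+vp)^2))/(vs+vp))"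
    unfolding s1_def[symmetric] s2_def[symmetric] by (simp add: algebra_simps)
qed


lemma hlim:
  fixes e2 vm vp M D :: real
  assumes "e2 > 0" "2*e2 < D"
  shows "\<forall>\<^sub>F x in at_right 0. x > 0 \<and> 2*x*(M+vm)^2/e2 + 2*e2 + 2 * sqrt x*(M+vp) < D"
proof -
  have "((\<lambda>x. 2*x*(M+vm)^2/e2 + 2*e2 + 2 * sqrt x*(M+vp)) \<longlongrightarrow> 2*0*(M+vm)^2/e2 + 2*e2 + 2 * sqrt 0*(M+vp)) (at_right (0::real))"
    using assms by (intro tendsto_intros) auto
  hence "((\<lambda>x. 2*x*(M+vm)^2/e2 + 2*e2 + 2 * sqrt x*(M+vp)) \<longlongrightarrow> 2*e2) (at_right (0::real))" by simp
  hence "\<forall>\<^sub>F x in at_right 0. 2*x*(M+vm)^2/e2 + 2*e2 + 2 * sqrt x*(M+vp) < D"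
    using assms(2) by (rule order_tendstoD(2))
  moreover have "\<forall>\<^sub>F x in at_right (0::real). x > 0" by (rule eventually_at_right_less)
  ultimately show ?thesis by eventually_elim auto
qed

lemma hmono:
  fixes x e2 vm vp v M :: real
  assumes "x > 0" "e2 > 0" "vm > 0" "vp > 0" "v \<ge> 0" "v \<le> M"
  shows "2*x*(v+vm)^2/e2 + 2*e2 + 2 * sqrt x*(v+vp) \<le> 2*x*(M+vm)^2/e2 + 2*e2 + 2 * sqrt x*(M+vp)"
proof -
  have "(v+vm)^2 \<le> (M+vm)^2" using assms by (intro power_mono) auto
  hence "2*x*(v+vm)^2/e2 \<le> 2*x*(M+vm)^2/e2" using assms by (intro divide_right_mono mult_left_mono) auto
  moreover have "2 * sqrt x*(v+vp) \<le> 2 * sqrt x*(M+vp)" using assms by (intro mult_left_mono) auto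
  ultimately show ?thesis by linarith
qed

theorem lemma6p4:
  fixes e2 um vm up vp :: real
  assumes "e2 > 0" and "vm > 0" and "vp > 0" and "um > up + 2 * e2"
  shows "(\<forall>\<^sub>F e1 in at_right 0. \<exists>us vs. two_shock_state e1 e2 um vm up vp us vs) \<and>
    (\<forall>e>0. \<forall>\<^sub>F e1 in at_right 0. \<forall>us vs. two_shock_state e1 e2 um vm up vp us vs \<longrightarrow>
       \<bar>(LBINT \<xi>=ereal (shock_speed1 e2 um vm us vs)..ereal (shock_speed2 e2 up vp us vs). vs)
         - (1/2) * (vp * (um - up + 2 * e2) - vm * (up - um + 2 * e2))\<bar> < e)"
proof
  note e2 = assms(1) and vm = assms(2) and vp = assms(3)
  define D where "D = um - up"
  have D2: "2*e2 < D" using assms(4) unfolding D_def by simp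
  define f where "f x v = (v-vm)*(sqrt(e2^2+4*x*(v+vm)^2) - e2)/(v+vm) + (v-vp)*(e2 + sqrt(e2^2+4*x*(v+vp)^2))/(v+vp)" for x v
  define v0 where "v0 = max vm vp"
  show "\<forall>\<^sub>F e1 in at_right 0. \<exists>us vs. two_shock_state e1 e2 um vm up vp us vs"
    using hlim[OF e2 D2, of v0 vm vp]
  proof eventually_elim
    case (elim x)
    hence x: "x > 0" and hx: "2*x*(v0+vm)^2/e2 + 2*e2 + 2 * sqrt x*(v0+vp) < D" by auto
    have fv0: "f x v0 < D" using fbound[OF x e2 vm vp, of v0] hx unfolding f_def v0_def by auto
    have sx: "sqrt x > 0" using x by simp
    define V where "V = v0 + D/(2 * sqrt x)"
    have DV: "D/(2 * sqrt x) > 0" using D2 e2 sx by simp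
    have V: "V \<ge> v0" "V > vm" "V > vp" using DV unfolding V_def v0_def by auto
    have fV: "f x V \<ge> D"
    proof -
      have t1: "(V-vm)*(sqrt(e2^2+4*x*(V+vm)^2) - e2)/(V+vm) \<ge> 0"
        using V vm sqge[OF e2, of x "V+vm"] x by simp
      have s2: "2 * sqrt x*(V+vp) \<le> sqrt(e2^2+4*x*(V+vp)^2)" using x V vp by (intro sqb3) auto
      have "(V-vp)*(2 * sqrt x) = (V-vp)*(2 * sqrt x*(V+vp))/(V+vp)" using V vp by simp
      also have "\<dots> \<le> (V-vp)*(e2 + sqrt(e2^2+4*x*(V+vp)^2))/(V+vp)"
        using s2 V vp e2 by (intro divide_right_mono mult_left_mono) auto
      finally have t2: "(V-vp)*(2 * sqrt x) \<le> (V-vp)*(e2 + sqrt(e2^2+4*x*(V+vp)^2))/(V+vp)" .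
      have "D = (D/(2 * sqrt x))*(2 * sqrt x)" using sx by simp
      also have "\<dots> \<le> (V-vp)*(2 * sqrt x)" using sx V unfolding V_def v0_def
        by (intro mult_right_mono) auto
      finally show ?thesis using t1 t2 unfolding f_def by linarith
    qed
    have cont: "continuous_on {v0..V} (f x)"
      unfolding f_def using vm vp unfolding v0_def
      by (intro continuous_intros) (auto simp: add_pos_pos)
    obtain vs where vs: "v0 \<le> vs" "vs \<le> V" "f x vs = D"
      using IVT'[of "f x" v0 D V] fv0 fV V cont by auto
    have vsg: "vs > v0" proof -
      have "vs \<noteq> v0" using vs(3) fv0 by auto
      thus ?thesis using vs(1) by simp
    qed
    define s1 where "s1 = sqrt(e2^2+4*x*(vs+vm)^2)"
    define s2 where "s2 = sqrt(e2^2+4*x*(vs+vp)^2)"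
    have vsm: "vs > vm" "vs > vp" using vsg unfolding v0_def by auto
    have s1g: "s1 > e2"
    proof -
      have "e2^2 < e2^2+4*x*(vs+vm)^2" using x vsm vm by simp
      hence "sqrt (e2^2) < s1" unfolding s1_def by (rule real_sqrt_less_mono)
      thus ?thesis using e2 by simp
    qed
    have s2g: "s2 \<ge> e2" unfolding s2_def using e2 x by (intro sqge) auto
    define us where "us = um + (vs - vm) * (e2 - s1) / (vs + vm)"
    have fvs: "D = (vs-vm)*((s1 - e2)/(vs+vm)) + (vs-vp)*((e2 + s2)/(vs+vp))"
      using vs(3) unfolding f_def s1_def s2_def by simp
    have n1: "(vs - vm) * (e2 - s1) / (vs + vm) < 0"
      using vsm vm s1g by (simp add: divide_neg_pos mult_pos_neg)
    have n2: "(vp - vs) * (e2 + s2) / (vs + vp) < 0"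
      using vsm vp s2g e2 by (intro divide_neg_pos mult_neg_pos) auto
    have q1: "(vs - vm) * (e2 - s1) / (vs + vm) = -((vs-vm)*((s1 - e2)/(vs+vm)))"
      by (metis minus_diff_eq mult_minus_right minus_divide_left times_divide_eq_right)
    have q2: "(vp - vs) * (e2 + s2) / (vs + vp) = -((vs-vp)*((e2 + s2)/(vs+vp)))"
      by (metis minus_diff_eq mult_minus_left minus_divide_left times_divide_eq_right)
    have upeq: "up = us + (vp - vs) * (e2 + s2) / (vs + vp)"
      unfolding us_def q1 q2 using fvs unfolding D_def by linarith
    have "two_shock_state x e2 um vm up vp us vs"
      unfolding two_shock_state_def s1_def[symmetric] s2_def[symmetric]
      using vsg upeq n1 n2 unfolding v0_def us_def by auto
    thus ?case by blast
  qed
  show "\<forall>e>0. \<forall>\<^sub>F e1 in at_right 0. \<forall>us vs. two_shock_state e1 e2 um vm up vp us vs \<longrightarrow>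
       \<bar>(LBINT \<xi>=ereal (shock_speed1 e2 um vm us vs)..ereal (shock_speed2 e2 up vp us vs). vs)
         - (1/2) * (vp * (um - up + 2 * e2) - vm * (up - um + 2 * e2))\<bar> < e"
  proof (intro allI impI)
    fix e :: real assume e: "e > 0"
    define K where "K = (vm+vp)^2*(D+e2)"
    have K: "K \<ge> 0" unfolding K_def using D2 e2 by simp
    define M where "M = max (max (2* vm) (2* vp)) (K/e)"
    show "\<forall>\<^sub>F e1 in at_right 0. \<forall>us vs. two_shock_state e1 e2 um vm up vp us vs \<longrightarrow>
       \<bar>(LBINT \<xi>=ereal (shock_speed1 e2 um vm us vs)..ereal (shock_speed2 e2 up vp us vs). vs)
         - (1/2) * (vp * (um - up + 2 * e2) - vm * (up - um + 2 * e2))\<bar> < e"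
      using hlim[OF e2 D2, of M vm vp]
    proof eventually_elim
      case (elim x)
      hence x: "x > 0" and hx: "2*x*(M+vm)^2/e2 + 2*e2 + 2 * sqrt x*(M+vp) < D" by auto
      show ?case
      proof (intro allI impI)
        fix us vs assume st: "two_shock_state x e2 um vm up vp us vs"
        note sf = state_facts[OF st x e2 vm vp]
        have vsM: "vs > M"
        proof (rule ccontr)
          assume "\<not> vs > M"
          hence "vs \<le> M" by simp
          hence "2*x*(vs+vm)^2/e2 + 2*e2 + 2 * sqrt x*(vs+vp) \<le> 2*x*(M+vm)^2/e2 + 2*e2 + 2 * sqrt x*(M+vp)"
            using sf(1) vm x e2 vp by (intro hmono) auto
          moreover have "um - up \<le> 2*x*(vs+vm)^2/e2 + 2*e2 + 2 * sqrt x*(vs+vp)"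
            unfolding sf(3) using fbound[OF x e2 vm vp, of vs] sf(1,2) by auto
          ultimately show False using hx unfolding D_def by linarith
        qed
        have vs1: "vs \<ge> 2* vm" "vs \<ge> 2* vp" "vs > K/e" using vsM unfolding M_def by auto
        have c: "\<bar>vm*(vs*(sqrt(e2^2+4*x*(vs+vm)^2)-e2)/(vs+vm)) + vp*(vs*(e2+sqrt(e2^2+4*x*(vs+vp)^2))/(vs+vp))
          - (1/2)*(vp*(D+2*e2)+vm*(D-2*e2))\<bar> \<le> (vm+vp)^2*(D+e2)/vs"
          apply (rule core[OF vm vp e2 x vs1(1,2)])
          using sqge[OF e2] x apply auto[2]
          using x apply simp
          using x apply simp
          unfolding D_def by (rule sf(3))
        have vsp: "vs > 0" using sf(1) vm by simp
        have Ke: "K/vs < e" using vs1(3) vsp e K by (simp add: divide_less_eq mult.commute pos_divide_less_eq)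
        have eqI: "(LBINT \<xi>=ereal (shock_speed1 e2 um vm us vs)..ereal (shock_speed2 e2 up vp us vs). vs)
            = vm*(vs*(sqrt(e2^2+4*x*(vs+vm)^2)-e2)/(vs+vm)) + vp*(vs*(e2+sqrt(e2^2+4*x*(vs+vp)^2))/(vs+vp))"
          using sf(4) by simp
        have eqT: "(1/2) * (vp * (um - up + 2 * e2) - vm * (up - um + 2 * e2)) = (1/2)*(vp*(D+2*e2)+vm*(D-2*e2))"
          unfolding D_def by (simp add: algebra_simps)
        show "\<bar>(LBINT \<xi>=ereal (shock_speed1 e2 um vm us vs)..ereal (shock_speed2 e2 up vp us vs). vs)
         - (1/2) * (vp * (um - up + 2 * e2) - vm * (up - um + 2 * e2))\<bar> < e"
          unfolding eqI eqT using c Ke unfolding K_def by linarith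
      qed
    qed
  qed
qed

end
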